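(* Suppose Assumptions 1 and 2 hold and the learner runs the TH LASSO bandit algorithm with some $\lambda_0>0$. Let $C_0=\min\{\frac12,\frac{\phi_0^2}{256s_0s_A^2}\}$, $\hat\Sigma_t=\frac1t\sum_{s=1}^tA_sA_s^\top$ and $\Sigma_t=\frac1t\sum_{s=1}^t\mathbb E[A_sA_s^\top\mid\mathcal H_{s-1}]$. Then for all $t\ge\frac{2\log(2d^2)}{C_0^2}$, $$\Pr\Big(\frac{1}{2s_A^2}\|\hat\Sigma_t-\Sigma_t\|_\infty\ge\frac{\phi^2(\Sigma_t,S)}{64s_0s_A^2}\Big)\le\exp\Big(-\frac{tC_0^2}{2}\Big),$$ where $\|M\|_\infty=\max_{i,j}|M_{ij}|$ is the entrywise maximum norm.
   Context: Model: Fix integers $K\ge 2$, $d\ge 1$ and an unknown $\theta\in\mathbb R^d$. In each round $t=1,2,\dots$ a context set $\mathcal A_t=\{A_{t,1},\dots,A_{t,K}\}$ with $A_{t,k}\in\mathbb R^d$ is revealed; the sequence $(\mathcal A_t)_{t\ge1}$ is i.i.d. with distribution $p_A$ on $\mathbb R^{K\times d}$. The learner selects $A_t\in\mathcal A_t$, measurable with respect to $\mathcal F_t=\sigma(\mathcal A_1,A_1,r_1,\dots,\mathcal A_{t-1},A_{t-1},r_{t-1},\mathcal A_t)$ (together with independent internal randomization for tie-breaking), and observes $r_t=\langle A_t,\theta\rangle+\varepsilon_t$, where conditionally on $\mathcal F_t$ and $A_t$ the noise $\varepsilon_t$ has mean zero and is sub-Gaussian with variance proxy $\sigma^2$. $\mathcal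 H_{s-1}$ denotes the sigma-algebra generated by all observations (contexts, choices, rewards and tie-breaking randomness) of rounds $1,\dots,s-1$. Notation: $S=\{i\in[d]:\theta_i\neq0\}$; for $B\subset[d]$ and $x\in\mathbb R^d$, $x_B\in\mathbb R^d$ has coordinates $x_i\mathbb 1\{i\in B\}$. Assumption 1: $\|\theta\|_0\le s_0$ for an integer $s_0\ge1$; $\|\theta\|_2\le s_2$; and almost surely $\|A_{t,k}\|_2\le s_A$ for all $t,k$. Compatibility constant: for $M\in\mathbb R^{d\times d}$ and $S_0\subset[d]$, $\phi^2(M,S_0)=\min\{ s_0\, x^\top Mx/\|x_{S_0}\|_1^2 : x\in\mathbb R^d,\ \|x_{S_0}\|_1\ne0,\ \|x_{S_0^c}\|_1\le3\|x_{S_0}\|_1\}$. Assumption 2: there is $\phi_0>0$ such that for every $\theta'\in\mathbb R^d$ the matrix $\Sigma(\theta')=\mathbb E_{\mathcal A\sim p_A}\big[\sum_{k=1}^K A_kA_k^\top\mathbb 1\{k=\arg\max_{k'}\langle A_{k'},\theta'\rangle\}\big]$ satisfies $\phi^2(\Sigma(\theta'),S)\ge\phi_0^2$. TH LASSO bandit algorithm (parameter $\lambda_0>0$), with $\hat\theta_1$ arbitrary (e.g. $0$): in round $t$, pull $A_t\in\arg\max_{A\in\mathcal A_t}\langle A,\hat\theta_t\rangle$ (ties broken uniformly at random) and observe $r_t$. Set $\lambda_t=\lambda_0\sqrt{2\log t\log d/t}$, let $\mathbf A\in\mathbb R^{t\times d}$ have rows $A_1^\top,\dots,A_t^\top$ and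 $R=(r_1,\dots,r_t)^\top$; compute $\hat\theta_0^{(t)}\in\arg\min_{\theta'}\frac1t\|R-\mathbf A\theta'\|_2^2+\lambda_t\|\theta'\|_1$, $\hat S_0^{(t)}=\{j:|(\hat\theta_0^{(t)})_j|>4\lambda_t\}$, $\hat S_1^{(t)}=\{j\in\hat S_0^{(t)}:|(\hat\theta_0^{(t)})_j|\ge4\lambda_t\sqrt{|\hat S_0^{(t)}|}\}$; with $\mathbf A(\hat S_1^{(t)})$ the submatrix of columns in $\hat S_1^{(t)}$, set $\hat\theta_{t+1}$ equal to $(\mathbf A(\hat S_1^{(t)})^\top\mathbf A(\hat S_1^{(t)}))^{-1}\mathbf A(\hat S_1^{(t)})^\top R$ on coordinates in $\hat S_1^{(t)}$ and $0$ elsewhere. *)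

theory Defs
  imports "HOL-Probability.Probability"
begin

definition restr_vec :: "'d set \<Rightarrow> real^'d \<Rightarrow> real^'d" where
  "restr_vec B x = (\<chi> i. if i \<in> B then x $ i else 0)"

definition l1norm :: "real^'d::finite \<Rightarrow> real" where
  "l1norm x = (\<Sum>i\<in>UNIV. \<bar>x $ i\<bar>)"

definition outer :: "real^'d \<Rightarrow> real^'d^'d" where
  "outer a = (\<chi> i j. a $ i * a $ j)"

definition maxnorm :: "real^'d::finite^'d \<Rightarrow> real" where
  "maxnorm A = Max {\<bar>A $ i $ j\<bar> | i j. True}"

text \<open>Compatibility constant phi^2(M,S0) (min over the cone; Inf in ereal, so the
  empty constraint set (S0 empty) gives +infinity).\<close>
definition compat :: "nat \<Rightarrow> real^'d::finite^'d \<Rightarrow> 'd set \<Rightarrow> ereal" where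
  "compat s0 A S0 =
     (INF x \<in> {x. l1norm (restr_vec S0 x) \<noteq> 0 \<and>
                  l1norm (restr_vec (- S0) x) \<le> 3 * l1norm (restr_vec S0 x)}.
        ereal (real s0 * (x \<bullet> (A *v x)) / (l1norm (restr_vec S0 x))\<^sup>2))"

text \<open>Greedy set of arms, context set a = (A_1,...,A_K) with A_k = a $ k.\<close>
definition argmax_arms :: "real^'d^'k \<Rightarrow> real^'d \<Rightarrow> 'k set" where
  "argmax_arms a th = {k. \<forall>k'. a $ k' \<bullet> th \<le> a $ k \<bullet> th}"

text \<open>Sigma(theta'): expected Gram matrix of the greedily pulled arm, ties broken
  uniformly at random.\<close>
definition Sigma_pop :: "(real^'d^'k) measure \<Rightarrow> real^'d \<Rightarrow> real^'d^'d" where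
  "Sigma_pop pA th = (\<chi> i j. integral\<^sup>L pA (\<lambda>a.
      \<Sum>k\<in>UNIV. a $ k $ i * a $ k $ j *
        (if k \<in> argmax_arms a th then 1 / real (card (argmax_arms a th)) else 0)))"

text \<open>Least squares restricted to the coordinates B: the vector v supported on B with
  (G v)_j = b_j for j in B, i.e. v_B = (A(B)^T A(B))^{-1} A(B)^T R when G = A^T A, b = A^T R.\<close>
definition ols :: "'d set \<Rightarrow> real^'d^'d \<Rightarrow> real^'d \<Rightarrow> real^'d" where
  "ols B G b = (THE v. (\<forall>j. j \<notin> B \<longrightarrow> v $ j = 0) \<and> (\<forall>j\<in>B. (G *v v) $ j = b $ j))"

definition lasso_lambda :: "real \<Rightarrow> nat \<Rightarrow> nat \<Rightarrow> real" where
  "lasso_lambda lam0 d t = lam0 * sqrt (2 * ln (real t) * ln (real d) / real t)"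

text \<open>Given data (A_s, r_s), s = 1..t, and a LASSO solution L, the next estimate.\<close>
definition th_update :: "real \<Rightarrow> nat \<Rightarrow> (nat \<Rightarrow> real^'d::finite) \<Rightarrow> (nat \<Rightarrow> real) \<Rightarrow> real^'d \<Rightarrow> real^'d" where
  "th_update lt t A r L =
     (let S0 = {j. \<bar>L $ j\<bar> > 4 * lt};
          S1 = {j \<in> S0. \<bar>L $ j\<bar> \<ge> 4 * lt * sqrt (real (card S0))}
      in ols S1 (\<Sum>s\<in>{1..t}. outer (A s)) (\<Sum>s\<in>{1..t}. r s *\<^sub>R A s))"

definition lasso_obj :: "real \<Rightarrow> nat \<Rightarrow> (nat \<Rightarrow> real^'d::finite) \<Rightarrow> (nat \<Rightarrow> real) \<Rightarrow> real^'d \<Rightarrow> real" where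
  "lasso_obj lt t A r th = (1 / real t) * (\<Sum>s\<in>{1..t}. (r s - A s \<bullet> th)\<^sup>2) + lt * l1norm th"

definition preimgs :: "'w measure \<Rightarrow> ('w \<Rightarrow> 'a) \<Rightarrow> 'a measure \<Rightarrow> 'w set set" where
  "preimgs M f N = {f -` B \<inter> space M | B. B \<in> sets N}"

definition hist :: "'w measure \<Rightarrow> (nat \<Rightarrow> 'w \<Rightarrow> real^'d^'k) \<Rightarrow> (nat \<Rightarrow> 'w \<Rightarrow> 'k)
    \<Rightarrow> (nat \<Rightarrow> 'w \<Rightarrow> real) \<Rightarrow> nat \<Rightarrow> 'w measure" where
  "hist M X I r s = sigma (space M)
     (\<Union>u\<in>{1..s}. preimgs M (X u) borel \<union> preimgs M (I u) (count_space UNIV)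
                   \<union> preimgs M (r u) borel)"

definition hist_ctx :: "'w measure \<Rightarrow> (nat \<Rightarrow> 'w \<Rightarrow> real^'d^'k) \<Rightarrow> (nat \<Rightarrow> 'w \<Rightarrow> 'k)
    \<Rightarrow> (nat \<Rightarrow> 'w \<Rightarrow> real) \<Rightarrow> nat \<Rightarrow> 'w measure" where
  "hist_ctx M X I r t = sigma (space M) (sets (hist M X I r (t - 1)) \<union> preimgs M (X t) borel)"

definition hist_ctx_act :: "'w measure \<Rightarrow> (nat \<Rightarrow> 'w \<Rightarrow> real^'d^'k) \<Rightarrow> (nat \<Rightarrow> 'w \<Rightarrow> 'k)
    \<Rightarrow> (nat \<Rightarrow> 'w \<Rightarrow> real) \<Rightarrow> nat \<Rightarrow> 'w measure" where
  "hist_ctx_act M X I r t = sigma (space M)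
     (sets (hist_ctx M X I r t) \<union> preimgs M (I t) (count_space UNIV))"

end

theory Submission
  imports Defs
begin


lemma (in prob_space) indep_set_mono':
  assumes "indep_set A B" "A' \<subseteq> A" "B' \<subseteq> B"
  shows "indep_set A' B'"
  using assms unfolding indep_set_def
  by (intro indep_sets_mono_sets[OF assms(1)[unfolded indep_set_def]]) (auto split: bool.split)

lemma (in prob_space) indep_set_commute':
  assumes "indep_set A B" shows "indep_set B A"
  using assms unfolding indep_sets2_eq by (metis Int_commute mult.commute)

lemma freeze:
  fixes X :: "'w \<Rightarrow> 'a" and Y :: "'w \<Rightarrow> 'b" and f :: "'a \<times> 'b \<Rightarrow> real"
  assumes M: "prob_space M" and G: "subalgebra M G"
    and Xm[measurable]: "X \<in> M \<rightarrow>\<^sub>M SX" and YG: "Y \<in> G \<rightarrow>\<^sub>M SY"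
    and ind: "prob_space.indep_set M (sets G) (preimgs M X SX)"
    and fm[measurable]: "f \<in> borel_measurable (SX \<Otimes>\<^sub>M SY)"
    and fb: "\<And>z. \<bar>f z\<bar> \<le> c"
  shows "AE \<omega> in M. real_cond_exp M G (\<lambda>\<omega>. f (X \<omega>, Y \<omega>)) \<omega> = (\<integral>a. f (a, Y \<omega>) \<partial>(distr M SX X))"
proof -
  interpret prob_space M by fact
  interpret finite_measure_subalgebra M G by unfold_locales (rule G)
  have c0: "0 \<le> c" using fb[of undefined] by linarith
  define P where "P = distr M SX X"
  interpret P: prob_space P unfolding P_def by (rule prob_space_distr) simp
  have setsP: "sets P = sets SX" unfolding P_def by simp
  have Ym[measurable]: "Y \<in> M \<rightarrow>\<^sub>M SY" by (rule measurable_from_subalg[OF G YG])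
  define h where "h y = (\<integral>a. f (a, y) \<partial>P)" for y
  have hm[measurable]: "h \<in> borel_measurable SY"
  proof -
    have "(\<lambda>(y, a). f (a, y)) \<in> borel_measurable (SY \<Otimes>\<^sub>M SX)"
      by measurable
    then have "(\<lambda>(y, a). f (a, y)) \<in> borel_measurable (SY \<Otimes>\<^sub>M P)"
      by (simp add: measurable_cong_sets[OF sets_pair_measure_cong[OF refl setsP] refl])
    then show ?thesis unfolding h_def by (rule P.borel_measurable_lebesgue_integral[of "\<lambda>y a. f (a, y)" SY])
  qed
  have hb: "\<bar>h y\<bar> \<le> c" if yS: "y \<in> space SY" for y
  proof -
    have "\<bar>h y\<bar> \<le> (\<integral>a. \<bar>f (a, y)\<bar> \<partial>P)" unfolding h_def by (rule integral_abs_bound)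
    also have "\<dots> \<le> (\<integral>a. c \<partial>P)"
    proof (intro integral_mono P.integrable_const_bound[where B=c])
      have "(\<lambda>a. f (a, y)) \<in> borel_measurable SX" using yS by measurable
      then show "(\<lambda>a. \<bar>f (a, y)\<bar>) \<in> borel_measurable P" by (simp add: measurable_cong_sets[OF setsP refl])
    qed (use fb c0 in auto)
    finally show ?thesis by (simp add: P.prob_space)
  qed
  show ?thesis
  proof (rule real_cond_exp_charact)
    show "integrable M (\<lambda>\<omega>. f (X \<omega>, Y \<omega>))"
      by (rule integrable_const_bound[where B=c]) (use fb in auto)
    have hYm: "(\<lambda>\<omega>. h (Y \<omega>)) \<in> borel_measurable M" using measurable_compose[OF Ym hm] by (simp add: o_def)
    have "integrable M (\<lambda>\<omega>. h (Y \<omega>))"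
      by (rule integrable_const_bound[where B=c]) (use hb measurable_space[OF Ym] hYm in auto)
    then show "integrable M (\<lambda>\<omega>. \<integral>a. f (a, Y \<omega>) \<partial>distr M SX X)"
      by (simp add: h_def P_def)
    show "(\<lambda>\<omega>. \<integral>a. f (a, Y \<omega>) \<partial>distr M SX X) \<in> borel_measurable G"
      using measurable_compose[OF YG hm] by (simp add: h_def P_def)
  next
    fix A assume A: "A \<in> sets G"
    have AM: "A \<in> sets M" using A G by (auto simp: subalgebra_def)
    define Y' where "Y' \<omega> = (Y \<omega>, indicator A \<omega> :: real)" for \<omega>
    have Y'G: "Y' \<in> G \<rightarrow>\<^sub>M SY \<Otimes>\<^sub>M borel"
      unfolding Y'_def using YG A by measurable
    have Y'M[measurable]: "Y' \<in> M \<rightarrow>\<^sub>M SY \<Otimes>\<^sub>M borel" by (rule measurable_from_subalg[OF G Y'G])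
    have spG: "space G = space M" using G by (simp add: subalgebra_def)
    define D where "D = distr M (SY \<Otimes>\<^sub>M borel) Y'"
    interpret D: prob_space D unfolding D_def by (rule prob_space_distr) simp
    interpret PD: pair_sigma_finite P D
      by (simp add: pair_sigma_finite.intro P.sigma_finite_measure_axioms D.sigma_finite_measure_axioms)
    have joint: "P \<Otimes>\<^sub>M D = distr M (SX \<Otimes>\<^sub>M (SY \<Otimes>\<^sub>M borel)) (\<lambda>\<omega>. (X \<omega>, Y' \<omega>))"
    proof (rule pair_measure_eqI)
      show "sigma_finite_measure P" "sigma_finite_measure D"
        by (simp_all add: P.sigma_finite_measure_axioms D.sigma_finite_measure_axioms)
      show "sets (P \<Otimes>\<^sub>M D) = sets (distr M (SX \<Otimes>\<^sub>M (SY \<Otimes>\<^sub>M borel)) (\<lambda>\<omega>. (X \<omega>, Y' \<omega>)))"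
        by (simp add: P_def D_def)
    next
      fix A' B' assume A': "A' \<in> sets P" and B': "B' \<in> sets D"
      have A'S: "A' \<in> sets SX" using A' by (simp add: P_def)
      have B'S: "B' \<in> sets (SY \<Otimes>\<^sub>M borel)" using B' by (simp add: D_def)
      have a: "Y' -` B' \<inter> space M \<in> sets G"
        using measurable_sets[OF Y'G B'S] spG by simp
      have b: "X -` A' \<inter> space M \<in> preimgs M X SX" using A'S by (auto simp: preimgs_def)
      have eq: "(\<lambda>\<omega>. (X \<omega>, Y' \<omega>)) -` (A' \<times> B') \<inter> space M = (Y' -` B' \<inter> space M) \<inter> (X -` A' \<inter> space M)"
        by auto
      have "prob ((Y' -` B' \<inter> space M) \<inter> (X -` A' \<inter> space M)) = prob (Y' -` B' \<inter> space M) * prob (X -` A' \<inter> space M)"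
        by (rule indep_setD[OF ind a b])
      then show "emeasure P A' * emeasure D B' = emeasure (distr M (SX \<Otimes>\<^sub>M (SY \<Otimes>\<^sub>M borel)) (\<lambda>\<omega>. (X \<omega>, Y' \<omega>))) (A' \<times> B')"
        using A'S B'S unfolding P_def D_def
        by (simp add: emeasure_distr eq emeasure_eq_measure ennreal_mult'[symmetric] mult.commute)
    qed
    define F where "F z = snd (snd z) * f (fst z, fst (snd z))" for z :: "'a \<times> ('b \<times> real)"
    have Fm[measurable]: "F \<in> borel_measurable (SX \<Otimes>\<^sub>M (SY \<Otimes>\<^sub>M borel))"
      unfolding F_def by measurable
    have FXY: "F (X \<omega>, Y' \<omega>) = indicator A \<omega> * f (X \<omega>, Y \<omega>)" for \<omega>
      by (simp add: F_def Y'_def)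
    have intM: "integrable M (\<lambda>\<omega>. F (X \<omega>, Y' \<omega>))"
      unfolding FXY by (rule integrable_const_bound[where B=c]) (use fb c0 AM in \<open>auto simp: indicator_def\<close>)
    have intPD: "integrable (P \<Otimes>\<^sub>M D) F"
      unfolding joint by (subst integrable_distr_eq) (use intM in auto)
    have "(\<integral>\<omega>\<in>A. f (X \<omega>, Y \<omega>) \<partial>M) = (\<integral>\<omega>. F (X \<omega>, Y' \<omega>) \<partial>M)"
      by (simp add: set_lebesgue_integral_def FXY)
    also have "\<dots> = integral\<^sup>L (P \<Otimes>\<^sub>M D) F"
      unfolding joint by (rule integral_distr[symmetric]) auto
    also have "\<dots> = (\<integral>z. (\<integral>a. F (a, z) \<partial>P) \<partial>D)"
      using PD.integral_snd[of "\<lambda>a z. F (a, z)"] intPD by simp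
    also have "\<dots> = (\<integral>z. snd z * h (fst z) \<partial>D)"
      by (simp add: F_def h_def)
    also have "\<dots> = (\<integral>\<omega>. indicator A \<omega> * h (Y \<omega>) \<partial>M)"
      unfolding D_def by (subst integral_distr) (auto simp: Y'_def)
    also have "\<dots> = (\<integral>\<omega>\<in>A. (\<integral>a. f (a, Y \<omega>) \<partial>distr M SX X) \<partial>M)"
      by (simp add: set_lebesgue_integral_def h_def P_def)
    finally show "(\<integral>\<omega>\<in>A. f (X \<omega>, Y \<omega>) \<partial>M) = (\<integral>\<omega>\<in>A. (\<integral>a. f (a, Y \<omega>) \<partial>distr M SX X) \<partial>M)" .
  qed
qed


lemma cosh_le_exp_sq: fixes y :: real shows "(exp (-y) + exp y) / 2 \<le> exp (y\<^sup>2 / 2)"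
proof -
  have key: "(exp (-y) + exp y) / 2 \<le> exp (y\<^sup>2 / 2)" if y0: "y \<ge> 0" for y :: real
  proof -
    have "-(2*y) * (1/2) + ln (1 + (1/2) * (exp (2*y) - 1)) \<le> (2*y)\<^sup>2 / 8"
      using Hoeffdings_lemma_aux[of "2*y" "1/2"] y0 by simp
    hence "ln ((1 + exp (2*y)) / 2) \<le> y + y\<^sup>2 / 2"
      by (simp add: power2_eq_square field_simps)
    hence "(1 + exp (2*y)) / 2 \<le> exp (y + y\<^sup>2 / 2)"
      by (smt (verit) exp_gt_zero exp_le_cancel_iff exp_ln)
    also have "\<dots> = exp y * exp (y\<^sup>2/2)" by (simp add: exp_add)
    finally have f1: "(1 + exp (2*y)) / 2 \<le> exp y * exp (y\<^sup>2/2)" .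
    have e2: "exp (2*y) = exp y * exp y" by (metis exp_add mult_2)
    have f2: "(exp (-y) + exp y) / 2 = ((1 + exp (2*y)) / 2) / exp y"
      unfolding e2 by (simp add: field_simps exp_minus)
    have "((1 + exp (2*y)) / 2) / exp y \<le> exp (y\<^sup>2/2)"
      using f1 by (simp add: pos_divide_le_eq mult.commute)
    then show ?thesis unfolding f2 .
  qed
  show ?thesis
  proof (cases "y \<ge> 0")
    case True then show ?thesis by (rule key)
  next
    case False
    then have "(exp (-(-y)) + exp (-y)) / 2 \<le> exp ((-y)\<^sup>2 / 2)" by (intro key) simp
    then show ?thesis by (simp add: add.commute)
  qed
qed

lemma exp_affine_bound:
  fixes l c x :: real assumes l: "l \<ge> 0" and c: "c > 0" and x: "\<bar>x\<bar> \<le> c"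
  shows "exp (l * x) \<le> (exp (-(l*c)) + exp (l*c)) / 2 + ((exp (l*c) - exp (-(l*c))) / (2*c)) * x"
proof -
  define t where "t = (c + x) / (2*c)"
  have t0: "t \<ge> 0" "t \<le> 1" using x c by (auto simp: t_def field_simps)
  have xe: "x = (1 - t) *\<^sub>R (-c) + t *\<^sub>R c" using c by (simp add: t_def field_simps)
  have "exp (l * x) \<le> (1 - t) * exp (l * (-c)) + t * exp (l * c)"
    using convex_onD[OF convex_on_exp[OF l], of t "-c" c] t0 unfolding xe by simp
  also have "\<dots> = (exp (-(l*c)) + exp (l*c)) / 2 + ((exp (l*c) - exp (-(l*c))) / (2*c)) * x"
    using c by (simp add: t_def field_simps)
  finally show ?thesis .
qed

lemma cond_hoeffding:
  assumes M: "prob_space M" and G: "subalgebra M G"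
    and Dm[measurable]: "D \<in> borel_measurable M" and Db: "AE \<omega> in M. \<bar>D \<omega>\<bar> \<le> c" and c: "c > 0"
    and D0: "AE \<omega> in M. real_cond_exp M G D \<omega> = 0" and l: "l \<ge> 0"
  shows "AE \<omega> in M. real_cond_exp M G (\<lambda>\<omega>. exp (l * D \<omega>)) \<omega> \<le> exp (l\<^sup>2 * c\<^sup>2 / 2)"
proof -
  interpret prob_space M by fact
  interpret finite_measure_subalgebra M G by unfold_locales (rule G)
  define \<alpha> where "\<alpha> = (exp (-(l*c)) + exp (l*c)) / 2"
  define \<beta> where "\<beta> = (exp (l*c) - exp (-(l*c))) / (2*c)"
  have Dint: "integrable M D" by (rule integrable_const_bound[where B=c]) (use Db in auto)
  have eint: "integrable M (\<lambda>\<omega>. exp (l * D \<omega>))"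
    by (rule integrable_const_bound[where B="exp (l*c)"])
       (use Db l in \<open>auto elim!: eventually_mono intro: mult_left_mono\<close>)
  have aint: "integrable M (\<lambda>\<omega>. \<alpha> + \<beta> * D \<omega>)" using Dint by auto
  have al: "\<alpha> \<le> exp (l\<^sup>2 * c\<^sup>2 / 2)"
    using cosh_le_exp_sq[of "l*c"] by (simp add: \<alpha>_def power_mult_distrib)
  have "AE \<omega> in M. real_cond_exp M G (\<lambda>\<omega>. exp (l * D \<omega>)) \<omega> \<le> real_cond_exp M G (\<lambda>\<omega>. \<alpha> + \<beta> * D \<omega>) \<omega>"
  proof (rule real_cond_exp_mono[OF _ eint aint])
    show "AE \<omega> in M. exp (l * D \<omega>) \<le> \<alpha> + \<beta> * D \<omega>"
      using Db by eventually_elim (unfold \<alpha>_def \<beta>_def, rule exp_affine_bound[OF l c])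
  qed
  moreover have "AE \<omega> in M. real_cond_exp M G (\<lambda>\<omega>. \<alpha> + \<beta> * D \<omega>) \<omega> = real_cond_exp M G (\<lambda>\<omega>. \<alpha>) \<omega> + real_cond_exp M G (\<lambda>\<omega>. \<beta> * D \<omega>) \<omega>"
    by (rule real_cond_exp_add) (use Dint in auto)
  moreover have "AE \<omega> in M. real_cond_exp M G (\<lambda>\<omega>. \<alpha>) \<omega> = \<alpha>"
    by (rule real_cond_exp_F_meas) auto
  moreover have "AE \<omega> in M. real_cond_exp M G (\<lambda>\<omega>. \<beta> * D \<omega>) \<omega> = \<beta> * real_cond_exp M G D \<omega>"
    by (rule real_cond_exp_cmult[OF Dint])
  moreover note D0
  ultimately show ?thesis by eventually_elim (use al in auto)
qed

lemma azuma_mgf: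
  fixes D :: "nat \<Rightarrow> 'w \<Rightarrow> real"
  assumes M: "prob_space M"
    and F: "\<And>n. subalgebra M (F n)"
    and Fmono: "\<And>m n. m \<le> n \<Longrightarrow> sets (F m) \<subseteq> sets (F n)"
    and Dm: "\<And>s. s \<ge> 1 \<Longrightarrow> D s \<in> borel_measurable (F s)"
    and Db: "\<And>s. s \<ge> 1 \<Longrightarrow> AE \<omega> in M. \<bar>D s \<omega>\<bar> \<le> c"
    and D0: "\<And>s. s \<ge> 1 \<Longrightarrow> AE \<omega> in M. real_cond_exp M (F (s - 1)) (D s) \<omega> = 0"
    and c: "c > 0" and l: "l \<ge> 0"
  shows "integrable M (\<lambda>\<omega>. exp (l * (\<Sum>s\<in>{1..n}. D s \<omega>))) \<and>
    (\<integral>\<omega>. exp (l * (\<Sum>s\<in>{1..n}. D s \<omega>)) \<partial>M) \<le> exp (real n * (l\<^sup>2 * c\<^sup>2 / 2))"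
proof -
  interpret prob_space M by fact
  have spF: "space (F n) = space M" for n using F[of n] by (simp add: subalgebra_def)
  have subFF: "subalgebra (F n) (F m)" if "m \<le> n" for m n
    using Fmono[OF that] spF by (simp add: subalgebra_def)
  have DFn: "D s \<in> borel_measurable (F n)" if "1 \<le> s" "s \<le> n" for s n
    by (rule measurable_from_subalg[OF subFF[OF that(2)] Dm[OF that(1)]])
  have DM: "D s \<in> borel_measurable M" if "1 \<le> s" for s
    by (rule measurable_from_subalg[OF F Dm[OF that]])
  define S where "S k \<omega> = (\<Sum>s\<in>{1..k}. D s \<omega>)" for k \<omega>
  have SF: "S k \<in> borel_measurable (F k)" for k
    unfolding S_def by (rule borel_measurable_sum) (auto intro: DFn)
  have SM[measurable]: "S k \<in> borel_measurable M" for k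
    by (rule measurable_from_subalg[OF F SF])
  have Sb: "AE \<omega> in M. \<bar>S k \<omega>\<bar> \<le> real k * c" for k
  proof -
    have "AE \<omega> in M. \<forall>s\<in>{1..k}. \<bar>D s \<omega>\<bar> \<le> c"
      by (rule AE_finite_allI) (auto intro: Db)
    then show ?thesis
    proof eventually_elim
      case (elim \<omega>)
      have "\<bar>S k \<omega>\<bar> \<le> (\<Sum>s\<in>{1..k}. \<bar>D s \<omega>\<bar>)" unfolding S_def by (rule sum_abs)
      also have "\<dots> \<le> (\<Sum>s\<in>{1..k}. c)" using elim by (intro sum_mono) auto
      finally show ?case by simp
    qed
  qed
  have Sint: "integrable M (\<lambda>\<omega>. exp (l * S k \<omega>))" for k
  proof (rule integrable_const_bound[where B="exp (l * (real k * c))"])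
    show "AE \<omega> in M. norm (exp (l * S k \<omega>)) \<le> exp (l * (real k * c))"
      using Sb[of k] by eventually_elim (use l in \<open>auto intro: mult_left_mono\<close>)
  qed simp
  have "(\<integral>\<omega>. exp (l * S n \<omega>) \<partial>M) \<le> exp (real n * (l\<^sup>2 * c\<^sup>2 / 2))"
  proof (induction n)
    case 0
    then show ?case by (simp add: S_def prob_space)
  next
    case (Suc n)
    interpret Fn: finite_measure_subalgebra M "F n" by unfold_locales (rule F)
    define g where "g \<omega> = exp (l * D (Suc n) \<omega>)" for \<omega>
    have gm[measurable]: "g \<in> borel_measurable M" unfolding g_def using DM[of "Suc n"] by simp
    have Zm: "(\<lambda>\<omega>. exp (l * S n \<omega>)) \<in> borel_measurable (F n)" using SF[of n] by simp
    have eq: "exp (l * S (Suc n) \<omega>) = exp (l * S n \<omega>) * g \<omega>" for \<omega>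
      by (simp add: S_def g_def distrib_left exp_add)
    have cb: "AE \<omega> in M. real_cond_exp M (F n) g \<omega> \<le> exp (l\<^sup>2 * c\<^sup>2 / 2)"
      unfolding g_def
      by (rule cond_hoeffding[OF M F DM Db c _ l]) (use D0[of "Suc n"] in auto)
    have int1: "integrable M (\<lambda>\<omega>. exp (l * S n \<omega>) * g \<omega>)" using Sint[of "Suc n"] by (simp add: eq)
    have "(\<integral>\<omega>. exp (l * S (Suc n) \<omega>) \<partial>M) = (\<integral>\<omega>. exp (l * S n \<omega>) * g \<omega> \<partial>M)"
      by (simp add: eq)
    also have "\<dots> = (\<integral>\<omega>. exp (l * S n \<omega>) * real_cond_exp M (F n) g \<omega> \<partial>M)"
      by (rule Fn.real_cond_exp_intg(2)[OF int1 Zm gm, symmetric])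
    also have "\<dots> \<le> (\<integral>\<omega>. exp (l * S n \<omega>) * exp (l\<^sup>2 * c\<^sup>2 / 2) \<partial>M)"
    proof (rule integral_mono_AE)
      show "integrable M (\<lambda>\<omega>. exp (l * S n \<omega>) * real_cond_exp M (F n) g \<omega>)"
        by (rule Fn.real_cond_exp_intg(1)[OF int1 Zm gm])
      show "integrable M (\<lambda>\<omega>. exp (l * S n \<omega>) * exp (l\<^sup>2 * c\<^sup>2 / 2))"
        using Sint[of n] by simp
      show "AE \<omega> in M. exp (l * S n \<omega>) * real_cond_exp M (F n) g \<omega> \<le> exp (l * S n \<omega>) * exp (l\<^sup>2 * c\<^sup>2 / 2)"
        using cb by eventually_elim simp
    qed
    also have "\<dots> = (\<integral>\<omega>. exp (l * S n \<omega>) \<partial>M) * exp (l\<^sup>2 * c\<^sup>2 / 2)" by simp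
    also have "\<dots> \<le> exp (real n * (l\<^sup>2 * c\<^sup>2 / 2)) * exp (l\<^sup>2 * c\<^sup>2 / 2)"
      using Suc.IH by (simp add: mult_right_mono)
    also have "\<dots> = exp (real (Suc n) * (l\<^sup>2 * c\<^sup>2 / 2))"
      by (simp add: exp_add[symmetric] algebra_simps)
    finally show ?case .
  qed
  then show ?thesis using Sint[of n] by (simp add: S_def)
qed

lemma azuma_tail1:
  fixes D :: "nat \<Rightarrow> 'w \<Rightarrow> real"
  assumes M: "prob_space M"
    and F: "\<And>n. subalgebra M (F n)"
    and Fmono: "\<And>m n. m \<le> n \<Longrightarrow> sets (F m) \<subseteq> sets (F n)"
    and Dm: "\<And>s. s \<ge> 1 \<Longrightarrow> D s \<in> borel_measurable (F s)"
    and Db: "\<And>s. s \<ge> 1 \<Longrightarrow> AE \<omega> in M. \<bar>D s \<omega>\<bar> \<le> c"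
    and D0: "\<And>s. s \<ge> 1 \<Longrightarrow> AE \<omega> in M. real_cond_exp M (F (s - 1)) (D s) \<omega> = 0"
    and c: "c > 0" and n: "n \<ge> 1" and e: "\<epsilon> > 0"
  shows "measure M {\<omega> \<in> space M. (\<Sum>s\<in>{1..n}. D s \<omega>) \<ge> \<epsilon>} \<le> exp (- (\<epsilon>\<^sup>2 / (2 * real n * c\<^sup>2)))"
proof -
  interpret prob_space M by fact
  define l where "l = \<epsilon> / (real n * c\<^sup>2)"
  have l: "l > 0" using n c e by (simp add: l_def)
  have DM: "D s \<in> borel_measurable M" if "1 \<le> s" for s
    by (rule measurable_from_subalg[OF F Dm[OF that]])
  have SM[measurable]: "(\<lambda>\<omega>. \<Sum>s\<in>{1..n}. D s \<omega>) \<in> borel_measurable M"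
    by (rule borel_measurable_sum) (auto intro: DM)
  note mgf = azuma_mgf[where M=M and F=F and D=D and c=c and l=l and n=n, OF M F Fmono Dm Db D0 c less_imp_le[OF l]]
  have "{\<omega> \<in> space M. (\<Sum>s\<in>{1..n}. D s \<omega>) \<ge> \<epsilon>} =
        {\<omega> \<in> space M. exp (l * (\<Sum>s\<in>{1..n}. D s \<omega>)) \<ge> exp (l * \<epsilon>)}"
    using l by auto
  also have "measure M \<dots> \<le> (\<integral>\<omega>. exp (l * (\<Sum>s\<in>{1..n}. D s \<omega>)) \<partial>M) / exp (l * \<epsilon>)"
    by (rule integral_Markov_inequality_measure) (use mgf in auto)
  also have "\<dots> \<le> exp (real n * (l\<^sup>2 * c\<^sup>2 / 2)) / exp (l * \<epsilon>)"
    using mgf by (simp add: divide_right_mono)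
  also have "\<dots> = exp (real n * (l\<^sup>2 * c\<^sup>2 / 2) - l * \<epsilon>)" by (simp add: exp_diff)
  also have "real n * (l\<^sup>2 * c\<^sup>2 / 2) - l * \<epsilon> = - (\<epsilon>\<^sup>2 / (2 * real n * c\<^sup>2))"
    using n c by (simp add: l_def power2_eq_square field_simps)
  finally show ?thesis .
qed

lemma azuma_tail:
  fixes D :: "nat \<Rightarrow> 'w \<Rightarrow> real"
  assumes M: "prob_space M"
    and F: "\<And>n. subalgebra M (F n)"
    and Fmono: "\<And>m n. m \<le> n \<Longrightarrow> sets (F m) \<subseteq> sets (F n)"
    and Dm: "\<And>s. s \<ge> 1 \<Longrightarrow> D s \<in> borel_measurable (F s)"
    and Db: "\<And>s. s \<ge> 1 \<Longrightarrow> AE \<omega> in M. \<bar>D s \<omega>\<bar> \<le> c"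
    and D0: "\<And>s. s \<ge> 1 \<Longrightarrow> AE \<omega> in M. real_cond_exp M (F (s - 1)) (D s) \<omega> = 0"
    and c: "c > 0" and n: "n \<ge> 1" and e: "\<epsilon> > 0"
  shows "measure M {\<omega> \<in> space M. \<bar>\<Sum>s\<in>{1..n}. D s \<omega>\<bar> \<ge> \<epsilon>} \<le> 2 * exp (- (\<epsilon>\<^sup>2 / (2 * real n * c\<^sup>2)))"
proof -
  interpret prob_space M by fact
  have DM: "D s \<in> borel_measurable M" if "1 \<le> s" for s
    by (rule measurable_from_subalg[OF F Dm[OF that]])
  have SM[measurable]: "(\<lambda>\<omega>. \<Sum>s\<in>{1..n}. D s \<omega>) \<in> borel_measurable M"
    by (rule borel_measurable_sum) (auto intro: DM)
  have SM2[measurable]: "(\<lambda>\<omega>. \<Sum>s\<in>{1..n}. - D s \<omega>) \<in> borel_measurable M"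
    by (rule borel_measurable_sum) (auto intro: DM)
  have p1: "measure M {\<omega> \<in> space M. (\<Sum>s\<in>{1..n}. D s \<omega>) \<ge> \<epsilon>} \<le> exp (- (\<epsilon>\<^sup>2 / (2 * real n * c\<^sup>2)))"
    by (rule azuma_tail1[where M=M and F=F and D=D and c=c, OF M F Fmono Dm Db D0 c n e])
  have p2: "measure M {\<omega> \<in> space M. (\<Sum>s\<in>{1..n}. - D s \<omega>) \<ge> \<epsilon>} \<le> exp (- (\<epsilon>\<^sup>2 / (2 * real n * c\<^sup>2)))"
  proof (rule azuma_tail1[where M=M and F=F and D="\<lambda>s \<omega>. - D s \<omega>" and c=c, OF M F Fmono _ _ _ c n e])
    fix s :: nat assume s: "s \<ge> 1"
    show "(\<lambda>\<omega>. - D s \<omega>) \<in> borel_measurable (F s)" using Dm[OF s] by measurable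
    show "AE \<omega> in M. \<bar>- D s \<omega>\<bar> \<le> c" using Db[OF s] by simp
    interpret Fs: finite_measure_subalgebra M "F (s - 1)" by unfold_locales (rule F)
    have Dint: "integrable M (D s)"
      by (rule integrable_const_bound[where B=c]) (use Db[OF s] DM[OF s] in auto)
    have "AE \<omega> in M. real_cond_exp M (F (s - 1)) (\<lambda>\<omega>. (-1) * D s \<omega>) \<omega> = (-1) * real_cond_exp M (F (s - 1)) (D s) \<omega>"
      by (rule Fs.real_cond_exp_cmult[OF Dint])
    then show "AE \<omega> in M. real_cond_exp M (F (s - 1)) (\<lambda>\<omega>. - D s \<omega>) \<omega> = 0"
      using D0[OF s] by eventually_elim simp
  qed
  have "{\<omega> \<in> space M. \<bar>\<Sum>s\<in>{1..n}. D s \<omega>\<bar> \<ge> \<epsilon>} \<subseteq>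
        {\<omega> \<in> space M. (\<Sum>s\<in>{1..n}. D s \<omega>) \<ge> \<epsilon>} \<union> {\<omega> \<in> space M. (\<Sum>s\<in>{1..n}. - D s \<omega>) \<ge> \<epsilon>}"
    by (auto simp: sum_negf)
  then have "measure M {\<omega> \<in> space M. \<bar>\<Sum>s\<in>{1..n}. D s \<omega>\<bar> \<ge> \<epsilon>} \<le>
        measure M ({\<omega> \<in> space M. (\<Sum>s\<in>{1..n}. D s \<omega>) \<ge> \<epsilon>} \<union> {\<omega> \<in> space M. (\<Sum>s\<in>{1..n}. - D s \<omega>) \<ge> \<epsilon>})"
  proof (rule finite_measure_mono)
    have "{\<omega> \<in> space M. (\<Sum>s\<in>{1..n}. D s \<omega>) \<ge> \<epsilon>} \<in> events" "{\<omega> \<in> space M. (\<Sum>s\<in>{1..n}. - D s \<omega>) \<ge> \<epsilon>} \<in> events"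
      by measurable
    then show "{\<omega> \<in> space M. (\<Sum>s\<in>{1..n}. D s \<omega>) \<ge> \<epsilon>} \<union> {\<omega> \<in> space M. (\<Sum>s\<in>{1..n}. - D s \<omega>) \<ge> \<epsilon>} \<in> events"
      by (rule sets.Un)
  qed
  also have "\<dots> \<le> measure M {\<omega> \<in> space M. (\<Sum>s\<in>{1..n}. D s \<omega>) \<ge> \<epsilon>} + measure M {\<omega> \<in> space M. (\<Sum>s\<in>{1..n}. - D s \<omega>) \<ge> \<epsilon>}"
    by (rule measure_Un_le) measurable
  finally show ?thesis using p1 p2 by simp
qed


lemma quad_form: fixes A :: "real^'d::finite^'d"
  shows "x \<bullet> (A *v x) = (\<Sum>i\<in>UNIV. \<Sum>j\<in>UNIV. x$i * A$i$j * x$j)"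
  by (simp add: inner_vec_def matrix_vector_mult_def sum_distrib_left mult.assoc)

lemma quad_avg:
  fixes Ms :: "nat \<Rightarrow> real^'d::finite^'d"
  shows "x \<bullet> ((\<chi> i j. (1/real n) * (\<Sum>s\<in>{1..n}. Ms s $ i $ j)) *v x) = (1/real n) * (\<Sum>s\<in>{1..n}. x \<bullet> (Ms s *v x))"
  unfolding quad_form
  apply (simp add: sum_distrib_left sum_distrib_right mult.assoc mult.left_commute)
  apply (rule trans[OF sum.cong[OF refl sum.swap]])
  apply (rule sum.swap)
  done

lemma compat_avg:
  fixes Ms :: "nat \<Rightarrow> real^'d::finite^'d"
  assumes n: "n \<ge> 1" and c: "\<And>s. s \<in> {1..n} \<Longrightarrow> compat s0 (Ms s) S \<ge> ereal \<phi>"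
  shows "compat s0 (\<chi> i j. (1/real n) * (\<Sum>s\<in>{1..n}. Ms s $ i $ j)) S \<ge> ereal \<phi>"
  unfolding compat_def
proof (rule INF_greatest)
  fix x assume x: "x \<in> {x. l1norm (restr_vec S x) \<noteq> 0 \<and> l1norm (restr_vec (- S) x) \<le> 3 * l1norm (restr_vec S x)}"
  define L where "L = (l1norm (restr_vec S x))\<^sup>2"
  have each: "\<phi> \<le> real s0 * (x \<bullet> (Ms s *v x)) / L" if s: "s \<in> {1..n}" for s
  proof -
    have "ereal \<phi> \<le> compat s0 (Ms s) S" by (rule c[OF s])
    also have "\<dots> \<le> ereal (real s0 * (x \<bullet> (Ms s *v x)) / L)"
      unfolding compat_def L_def by (rule INF_lower[OF x])
    finally show ?thesis by simp
  qed
  have "real s0 * (x \<bullet> ((\<chi> i j. (1/real n) * (\<Sum>s\<in>{1..n}. Ms s $ i $ j)) *v x)) / L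
      = (1/real n) * (\<Sum>s\<in>{1..n}. real s0 * (x \<bullet> (Ms s *v x)) / L)"
    unfolding quad_avg by (simp add: sum_distrib_left sum_divide_distrib[symmetric] field_simps)
  also have "\<dots> \<ge> (1/real n) * (\<Sum>s\<in>{1..n}. \<phi>)"
    by (intro mult_left_mono sum_mono each) auto
  also have "(1/real n) * (\<Sum>s\<in>{1..n}. \<phi>) = \<phi>" using n by simp
  finally show "ereal \<phi> \<le> ereal (real s0 * (x \<bullet> ((\<chi> i j. (1/real n) * (\<Sum>s\<in>{1..n}. Ms s $ i $ j)) *v x)) / (l1norm (restr_vec S x))\<^sup>2)"
    by (simp add: L_def)
qed


lemma preimgs_sub: "f \<in> M \<rightarrow>\<^sub>M N \<Longrightarrow> preimgs M f N \<subseteq> sets M"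
  by (auto simp: preimgs_def)

lemma measurable_by_preimgs:
  assumes "f \<in> M \<rightarrow>\<^sub>M N" "preimgs M f N \<subseteq> sets H" "space H = space M"
  shows "f \<in> H \<rightarrow>\<^sub>M N"
proof (rule measurableI)
  fix x assume "x \<in> space H" then show "f x \<in> space N" using assms measurable_space by metis
next
  fix A assume "A \<in> sets N"
  then have "f -` A \<inter> space M \<in> preimgs M f N" by (auto simp: preimgs_def)
  then show "f -` A \<inter> space H \<in> sets H" using assms by auto
qed

context
  fixes M :: "'w measure" and X :: "nat \<Rightarrow> 'w \<Rightarrow> real^'d::finite^'k::finite" and I :: "nat \<Rightarrow> 'w \<Rightarrow> 'k" and r :: "nat \<Rightarrow> 'w \<Rightarrow> real"
  assumes X_meas: "\<And>t. X t \<in> M \<rightarrow>\<^sub>M borel"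
    and I_meas: "\<And>t. I t \<in> M \<rightarrow>\<^sub>M count_space UNIV"
    and r_meas: "\<And>t. r t \<in> M \<rightarrow>\<^sub>M borel"
begin

definition "gen n = (\<Union>u\<in>{1..n}. preimgs M (X u) borel \<union> preimgs M (I u) (count_space UNIV) \<union> preimgs M (r u) borel)"

lemma gen_sub: "gen n \<subseteq> sets M"
  unfolding gen_def using preimgs_sub[OF X_meas] preimgs_sub[OF I_meas] preimgs_sub[OF r_meas] by blast

lemma gen_pow: "gen n \<subseteq> Pow (space M)"
  using gen_sub sets.sets_into_space by blast

lemma hist_eq: "hist M X I r n = sigma (space M) (gen n)"
  by (simp add: hist_def gen_def)

lemma space_hist[simp]: "space (hist M X I r n) = space M"
  unfolding hist_eq by (simp add: space_measure_of_conv)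

lemma sets_hist: "sets (hist M X I r n) = sigma_sets (space M) (gen n)"
  unfolding hist_eq using gen_pow by (simp add: sets_measure_of)

lemma subalg_hist: "subalgebra M (hist M X I r n)"
  unfolding subalgebra_def using sets.sigma_sets_subset[OF gen_sub] by (simp add: sets_hist)

lemma hist_mono: "m \<le> n \<Longrightarrow> sets (hist M X I r m) \<subseteq> sets (hist M X I r n)"
  unfolding sets_hist gen_def by (intro sigma_sets_mono' UN_mono) auto

lemma gen_in_hist: "gen n \<subseteq> sets (hist M X I r n)"
  unfolding sets_hist by (rule sigma_sets_superset_generator)

lemma X_hist: assumes "1 \<le> s" "s \<le> n" shows "X s \<in> hist M X I r n \<rightarrow>\<^sub>M borel"
proof (rule measurable_by_preimgs[OF X_meas])
  have "preimgs M (X s) borel \<subseteq> gen n" unfolding gen_def using assms by auto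
  then show "preimgs M (X s) borel \<subseteq> sets (hist M X I r n)" using gen_in_hist[of n] by blast
qed simp

lemma I_hist: assumes "1 \<le> s" "s \<le> n" shows "I s \<in> hist M X I r n \<rightarrow>\<^sub>M count_space UNIV"
proof (rule measurable_by_preimgs[OF I_meas])
  have "preimgs M (I s) (count_space UNIV) \<subseteq> gen n" unfolding gen_def using assms by auto
  then show "preimgs M (I s) (count_space UNIV) \<subseteq> sets (hist M X I r n)" using gen_in_hist[of n] by blast
qed simp

lemma ctx_eq: "hist_ctx M X I r t = sigma (space M) (sets (hist M X I r (t - 1)) \<union> preimgs M (X t) borel)"
  by (simp add: hist_ctx_def)

lemma ctx_gen_sub: "sets (hist M X I r (t - 1)) \<union> preimgs M (X t) borel \<subseteq> sets M"
  using subalg_hist[of "t - 1"] preimgs_sub[OF X_meas] by (auto simp: subalgebra_def)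

lemma space_ctx[simp]: "space (hist_ctx M X I r t) = space M"
  unfolding ctx_eq by (simp add: space_measure_of_conv)

lemma sets_ctx: "sets (hist_ctx M X I r t) = sigma_sets (space M) (sets (hist M X I r (t - 1)) \<union> preimgs M (X t) borel)"
  unfolding ctx_eq using ctx_gen_sub sets.sets_into_space by (subst sets_measure_of) blast+

lemma subalg_ctx: "subalgebra M (hist_ctx M X I r t)"
  unfolding subalgebra_def using sets.sigma_sets_subset[OF ctx_gen_sub] by (simp add: sets_ctx)

lemma hist_sub_ctx: "subalgebra (hist_ctx M X I r t) (hist M X I r (t - 1))"
  unfolding subalgebra_def sets_ctx using sigma_sets_superset_generator[of "sets (hist M X I r (t - 1)) \<union> preimgs M (X t) borel" "space M"]
  by auto

lemma X_ctx: "X t \<in> hist_ctx M X I r t \<rightarrow>\<^sub>M borel"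
  by (rule measurable_by_preimgs[OF X_meas]) (use sigma_sets_superset_generator[of "sets (hist M X I r (t - 1)) \<union> preimgs M (X t) borel" "space M"] in \<open>auto simp: sets_ctx\<close>)

end


definition wt :: "real^'d^'k::finite \<Rightarrow> real^'d \<Rightarrow> 'k \<Rightarrow> real" where
  "wt a th k = (if k \<in> argmax_arms a th then 1 / real (card (argmax_arms a th)) else 0)"

lemma wt_alt: "wt a th k = (if (\<forall>k'\<in>UNIV. a $ k' \<bullet> th \<le> a $ k \<bullet> th) then 1 / (\<Sum>k'\<in>UNIV. if (\<forall>k''\<in>UNIV. a $ k'' \<bullet> th \<le> a $ k' \<bullet> th) then 1 else 0) else 0)"
proof -
  have "real (card (argmax_arms a th)) = (\<Sum>k'\<in>UNIV. if (\<forall>k''. a $ k'' \<bullet> th \<le> a $ k' \<bullet> th) then 1 else 0)"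
    by (simp add: argmax_arms_def sum.If_cases)
  then show ?thesis unfolding wt_def argmax_arms_def by simp
qed

lemma inner_meas[measurable]:
  "(\<lambda>z::((real^'d::finite^'k::finite) \<times> (real^'d)). fst z $ k \<bullet> snd z) \<in> borel_measurable (borel \<Otimes>\<^sub>M borel)"
proof -
  have "continuous_on UNIV (\<lambda>z::((real^'d::finite^'k::finite) \<times> (real^'d)). fst z $ k \<bullet> snd z)"
    by (intro continuous_intros)
  then have "(\<lambda>z::((real^'d::finite^'k::finite) \<times> (real^'d)). fst z $ k \<bullet> snd z) \<in> borel_measurable borel"
    by (rule borel_measurable_continuous_onI)
  then show ?thesis by (simp add: borel_prod)
qed

lemma argmax_pred[measurable]:
  "Measurable.pred (borel \<Otimes>\<^sub>M borel) (\<lambda>z::((real^'d::finite^'k::finite) \<times> (real^'d)). \<forall>k'\<in>UNIV. fst z $ k' \<bullet> snd z \<le> fst z $ k \<bullet> snd z)"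
  by (rule pred_intros_finite(3)) (simp, measurable)

lemma wt_meas: "(\<lambda>z. wt (fst z) (snd z) k) \<in> borel_measurable (borel \<Otimes>\<^sub>M borel)"
  unfolding wt_alt by measurable

lemma wt_bounds: "0 \<le> wt a th k" "wt a th k \<le> 1"
proof -
  show "0 \<le> wt a th k" by (simp add: wt_def)
  show "wt a th k \<le> 1"
  proof (cases "k \<in> argmax_arms a th")
    case True
    then have "card (argmax_arms a th) \<ge> 1" by (metis One_nat_def Suc_leI card_gt_0_iff empty_iff finite)
    then show ?thesis using True by (simp add: wt_def)
  qed (simp add: wt_def)
qed

definition gfun :: "'d \<Rightarrow> 'd \<Rightarrow> real^'d::finite^'k::finite \<Rightarrow> real^'d \<Rightarrow> real" where
  "gfun i j a th = (\<Sum>k\<in>UNIV. a $ k $ i * a $ k $ j *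
        (if k \<in> argmax_arms a th then 1 / real (card (argmax_arms a th)) else 0))"

definition gtr :: "real \<Rightarrow> 'd \<Rightarrow> 'd \<Rightarrow> ((real^'d::finite^'k::finite) \<times> (real^'d)) \<Rightarrow> real" where
  "gtr sA i j z = (if \<forall>k\<in>UNIV. norm (fst z $ k) \<le> sA then gfun i j (fst z) (snd z) else 0)"

lemma Sigma_pop_gfun: "Sigma_pop pA th $ i $ j = (\<integral>a. gfun i j a th \<partial>pA)"
  by (simp add: Sigma_pop_def gfun_def)

lemma comp_meas[measurable]:
  "(\<lambda>z::((real^'d::finite^'k::finite) \<times> (real^'d)). fst z $ k $ i) \<in> borel_measurable (borel \<Otimes>\<^sub>M borel)"
  "(\<lambda>z::((real^'d::finite^'k::finite) \<times> (real^'d)). norm (fst z $ k)) \<in> borel_measurable (borel \<Otimes>\<^sub>M borel)"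
proof -
  have "continuous_on UNIV (\<lambda>z::((real^'d::finite^'k::finite) \<times> (real^'d)). fst z $ k $ i)"
    by (intro continuous_intros)
  then have "(\<lambda>z::((real^'d::finite^'k::finite) \<times> (real^'d)). fst z $ k $ i) \<in> borel_measurable borel"
    by (rule borel_measurable_continuous_onI)
  then show "(\<lambda>z::((real^'d::finite^'k::finite) \<times> (real^'d)). fst z $ k $ i) \<in> borel_measurable (borel \<Otimes>\<^sub>M borel)"
    by (simp add: borel_prod)
  have "continuous_on UNIV (\<lambda>z::((real^'d::finite^'k::finite) \<times> (real^'d)). norm (fst z $ k))"
    by (intro continuous_intros)
  then have "(\<lambda>z::((real^'d::finite^'k::finite) \<times> (real^'d)). norm (fst z $ k)) \<in> borel_measurable borel"
    by (rule borel_measurable_continuous_onI)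
  then show "(\<lambda>z::((real^'d::finite^'k::finite) \<times> (real^'d)). norm (fst z $ k)) \<in> borel_measurable (borel \<Otimes>\<^sub>M borel)"
    by (simp add: borel_prod)
qed

lemma nth2_meas[measurable]: "(\<lambda>v::real^'d::finite^'k::finite. v $ k $ i) \<in> borel_measurable borel"
  by (rule borel_measurable_continuous_onI) (intro continuous_intros)

lemma nth1norm_meas[measurable]: "(\<lambda>v::real^'d::finite^'k::finite. norm (v $ k)) \<in> borel_measurable borel"
  by (rule borel_measurable_continuous_onI) (intro continuous_intros)

lemma gfun_wt: "gfun i j a th = (\<Sum>k\<in>UNIV. a $ k $ i * a $ k $ j * wt a th k)"
  by (simp add: gfun_def wt_def)

lemma gtr_meas[measurable]: "gtr sA i j \<in> borel_measurable (borel \<Otimes>\<^sub>M borel)"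
proof -
  have [measurable]: "Measurable.pred (borel \<Otimes>\<^sub>M borel) (\<lambda>z::((real^'d::finite^'k::finite) \<times> (real^'d)). \<forall>k\<in>UNIV. norm (fst z $ k) \<le> sA)"
    by (rule pred_intros_finite(3)) (simp, measurable)
  note wt_meas[measurable]
  show ?thesis unfolding gtr_def[abs_def] gfun_wt by measurable
qed

lemma abs_comp_le: "\<bar>v $ i\<bar> \<le> norm (v :: real^'d::finite)"
  by (rule component_le_norm_cart)

lemma gfun_bound:
  fixes a :: "real^'d::finite^'k::finite"
  assumes "\<forall>k. norm (a $ k) \<le> sA"
  shows "\<bar>gfun i j a th\<bar> \<le> real CARD('k::finite) * sA\<^sup>2"
proof -
  have "\<bar>gfun i j a th\<bar> \<le> (\<Sum>k\<in>(UNIV::'k set). \<bar>a $ k $ i * a $ k $ j * wt a th k\<bar>)"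
    unfolding gfun_wt by (rule sum_abs)
  also have "\<dots> \<le> (\<Sum>k\<in>(UNIV::'k set). sA\<^sup>2)"
  proof (rule sum_mono)
    fix k :: 'k
    have n: "norm (a $ k) \<le> sA" using assms by auto
    have sA0: "0 \<le> sA" using n norm_ge_zero[of "a $ k"] by linarith
    have "\<bar>a $ k $ i * a $ k $ j * wt a th k\<bar> = \<bar>a $ k $ i\<bar> * \<bar>a $ k $ j\<bar> * wt a th k"
      using wt_bounds(1)[of a th k] by (simp add: abs_mult)
    also have "\<dots> \<le> sA * sA * 1"
      by (intro mult_mono order.trans[OF abs_comp_le n] wt_bounds) (use sA0 in \<open>simp_all\<close>)
    finally show "\<bar>a $ k $ i * a $ k $ j * wt a th k\<bar> \<le> sA\<^sup>2" by (simp add: power2_eq_square)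
  qed
  finally show ?thesis by simp
qed

lemma gtr_bound: "\<bar>gtr sA i j z\<bar> \<le> real CARD('k::finite) * sA\<^sup>2"
  for z :: "((real^'d::finite^'k) \<times> (real^'d))"
  by (auto simp: gtr_def intro!: gfun_bound)


lemma sel_eq:
  fixes v :: "real^'d::finite^'k::finite"
  shows "(v $ k0) $ i * (v $ k0) $ j = (\<Sum>k\<in>UNIV. v $ k $ i * v $ k $ j * (if k0 = k then 1 else 0))"
  by (simp add: if_distrib cong: if_cong)

lemma sAsq: "\<bar>v $ i * v $ j\<bar> \<le> sA\<^sup>2" if "norm v \<le> sA" for v :: "real^'d::finite"
proof -
  have sA0: "0 \<le> sA" using that norm_ge_zero[of v] by linarith
  have "\<bar>v $ i * v $ j\<bar> = \<bar>v $ i\<bar> * \<bar>v $ j\<bar>" by (simp add: abs_mult)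
  also have "\<dots> \<le> sA * sA"
    by (intro mult_mono order.trans[OF abs_comp_le that]) (use sA0 in simp_all)
  finally show ?thesis by (simp add: power2_eq_square)
qed

lemma sel_meas:
  fixes f :: "'w \<Rightarrow> real^'d::finite^'k::finite" and g :: "'w \<Rightarrow> 'k"
  assumes [measurable]: "f \<in> N \<rightarrow>\<^sub>M borel" "g \<in> N \<rightarrow>\<^sub>M count_space UNIV"
  shows "(\<lambda>\<omega>. (f \<omega> $ g \<omega>) $ i * (f \<omega> $ g \<omega>) $ j) \<in> borel_measurable N"
proof -
  have eq: "(\<lambda>\<omega>. (f \<omega> $ g \<omega>) $ i * (f \<omega> $ g \<omega>) $ j) = (\<lambda>\<omega>. \<Sum>k\<in>UNIV. f \<omega> $ k $ i * f \<omega> $ k $ j * (if g \<omega> = k then 1 else 0))"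
    by (rule ext) (rule sel_eq)
  show ?thesis unfolding eq by measurable
qed

lemma cond_gram:
  fixes M :: "'w measure" and pA :: "(real^'d::finite^'k::finite) measure"
    and X :: "nat \<Rightarrow> 'w \<Rightarrow> real^'d^'k" and I :: "nat \<Rightarrow> 'w \<Rightarrow> 'k" and r :: "nat \<Rightarrow> 'w \<Rightarrow> real"
    and thetahat :: "nat \<Rightarrow> 'w \<Rightarrow> real^'d" and s :: nat and i j :: 'd
  assumes M: "prob_space M" and pAs: "sets pA = sets borel"
    and X_meas: "\<And>t. X t \<in> M \<rightarrow>\<^sub>M borel"
    and I_meas: "\<And>t. I t \<in> M \<rightarrow>\<^sub>M count_space UNIV"
    and r_meas: "\<And>t. r t \<in> M \<rightarrow>\<^sub>M borel"
    and s: "s \<ge> 1"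
    and Xd: "distr M borel (X s) = pA"
    and Xi: "prob_space.indep_set M (sets (hist M X I r (s - 1))) (preimgs M (X s) borel)"
    and bnd: "AE a in pA. \<forall>k. norm (a $ k) \<le> sA"
    and tie: "\<And>k. AE \<omega> in M. real_cond_exp M (hist_ctx M X I r s) (indicator {\<omega>\<in>space M. I s \<omega> = k}) \<omega> =
          (if k \<in> argmax_arms (X s \<omega>) (thetahat s \<omega>)
           then 1 / real (card (argmax_arms (X s \<omega>) (thetahat s \<omega>))) else 0)"
    and thmeas: "thetahat s \<in> hist M X I r (s - 1) \<rightarrow>\<^sub>M borel"
  shows "AE \<omega> in M. real_cond_exp M (hist M X I r (s - 1))
            (\<lambda>\<omega>'. (X s \<omega>' $ I s \<omega>') $ i * (X s \<omega>' $ I s \<omega>') $ j) \<omega> = Sigma_pop pA (thetahat s \<omega>) $ i $ j"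
proof -
  interpret prob_space M by fact
  define H where "H = hist M X I r (s - 1)"
  define F where "F = hist_ctx M X I r s"
  have subH: "subalgebra M H" unfolding H_def by (rule subalg_hist[OF X_meas I_meas r_meas])
  have subF: "subalgebra M F" unfolding F_def by (rule subalg_ctx[OF X_meas I_meas r_meas])
  have HF: "subalgebra F H" unfolding F_def H_def by (rule hist_sub_ctx[OF X_meas I_meas r_meas])
  interpret HH: finite_measure_subalgebra M H by unfold_locales (rule subH)
  interpret FF: finite_measure_subalgebra M F by unfold_locales (rule subF)
  have XF[measurable]: "X s \<in> F \<rightarrow>\<^sub>M borel" unfolding F_def by (rule X_ctx[OF X_meas I_meas r_meas])
  have XM[measurable]: "X s \<in> M \<rightarrow>\<^sub>M borel" by (rule X_meas)
  have IM[measurable]: "I s \<in> M \<rightarrow>\<^sub>M count_space UNIV" by (rule I_meas)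
  have thH: "thetahat s \<in> H \<rightarrow>\<^sub>M borel" using thmeas by (simp add: H_def)
  have thM[measurable]: "thetahat s \<in> M \<rightarrow>\<^sub>M borel" by (rule measurable_from_subalg[OF subH thH])
  have XB: "AE \<omega> in M. \<forall>k. norm (X s \<omega> $ k) \<le> sA"
    by (rule AE_distrD[OF XM]) (unfold Xd, rule bnd)
  define x where "x k \<omega> = X s \<omega> $ k $ i * X s \<omega> $ k $ j" for k \<omega>
  define ind where "ind k = (indicator {\<omega>\<in>space M. I s \<omega> = k} :: 'w \<Rightarrow> real)" for k
  define prod where "prod \<omega> = (X s \<omega> $ I s \<omega>) $ i * (X s \<omega> $ I s \<omega>) $ j" for \<omega>
  have xF[measurable]: "x k \<in> borel_measurable F" for k unfolding x_def by measurable
  have xM[measurable]: "x k \<in> borel_measurable M" for k unfolding x_def by measurable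
  have indM[measurable]: "ind k \<in> borel_measurable M" for k unfolding ind_def by measurable
  have prod_eq: "prod \<omega> = (\<Sum>k\<in>UNIV. x k \<omega> * ind k \<omega>)" if "\<omega> \<in> space M" for \<omega>
    unfolding prod_def x_def ind_def using that sel_eq[of "X s \<omega>" "I s \<omega>" i j]
    by (simp add: indicator_def)
  have prodM[measurable]: "prod \<in> borel_measurable M"
    by (rule measurable_cong[THEN iffD2, OF prod_eq]) (auto)
  have sAsq: "\<bar>v $ i * v $ j\<bar> \<le> sA\<^sup>2" if "norm v \<le> sA" for v :: "real^'d"
  proof -
    have sA0: "0 \<le> sA" using that norm_ge_zero[of v] by linarith
    have "\<bar>v $ i * v $ j\<bar> = \<bar>v $ i\<bar> * \<bar>v $ j\<bar>" by (simp add: abs_mult)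
    also have "\<dots> \<le> sA * sA"
      by (intro mult_mono order.trans[OF abs_comp_le that]) (use sA0 in simp_all)
    finally show ?thesis by (simp add: power2_eq_square)
  qed
  have xind_int: "integrable M (\<lambda>\<omega>. x k \<omega> * ind k \<omega>)" for k
  proof (rule integrable_const_bound[where B="sA\<^sup>2"])
    show "AE \<omega> in M. norm (x k \<omega> * ind k \<omega>) \<le> sA\<^sup>2"
      using XB
    proof eventually_elim
      case (elim \<omega>)
      have "\<bar>x k \<omega>\<bar> \<le> sA\<^sup>2" unfolding x_def by (rule sAsq) (use elim in auto)
      then show ?case by (auto simp: ind_def indicator_def)
    qed
  qed simp
  have prod_int: "integrable M prod"
  proof (rule integrable_const_bound[where B="sA\<^sup>2"])
    show "AE \<omega> in M. norm (prod \<omega>) \<le> sA\<^sup>2"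
      using XB by eventually_elim (simp add: prod_def sAsq)
  qed simp
  have s1: "AE \<omega> in M. real_cond_exp M F prod \<omega> = (\<Sum>k\<in>UNIV. x k \<omega> * wt (X s \<omega>) (thetahat s \<omega>) k)"
  proof -
    have a1: "AE \<omega> in M. real_cond_exp M F prod \<omega> = real_cond_exp M F (\<lambda>\<omega>. \<Sum>k\<in>UNIV. x k \<omega> * ind k \<omega>) \<omega>"
      by (rule FF.real_cond_exp_cong) (auto simp: prod_eq)
    have a2: "AE \<omega> in M. real_cond_exp M F (\<lambda>\<omega>. \<Sum>k\<in>UNIV. x k \<omega> * ind k \<omega>) \<omega> = (\<Sum>k\<in>UNIV. real_cond_exp M F (\<lambda>\<omega>. x k \<omega> * ind k \<omega>) \<omega>)"
      by (rule FF.real_cond_exp_sum) (rule xind_int)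
    have a3: "AE \<omega> in M. \<forall>k\<in>UNIV. real_cond_exp M F (\<lambda>\<omega>. x k \<omega> * ind k \<omega>) \<omega> = x k \<omega> * wt (X s \<omega>) (thetahat s \<omega>) k"
    proof (rule AE_finite_allI)
      fix k :: 'k
      have "AE \<omega> in M. real_cond_exp M F (\<lambda>\<omega>. x k \<omega> * ind k \<omega>) \<omega> = x k \<omega> * real_cond_exp M F (ind k) \<omega>"
        by (rule FF.real_cond_exp_mult) (auto intro: xind_int)
      moreover have "AE \<omega> in M. real_cond_exp M F (ind k) \<omega> = wt (X s \<omega>) (thetahat s \<omega>) k"
        using tie[of k] unfolding ind_def F_def wt_def .
      ultimately show "AE \<omega> in M. real_cond_exp M F (\<lambda>\<omega>. x k \<omega> * ind k \<omega>) \<omega> = x k \<omega> * wt (X s \<omega>) (thetahat s \<omega>) k"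
        by eventually_elim simp
    qed simp
    from a1 a2 a3 show ?thesis by eventually_elim simp
  qed
  have s2: "AE \<omega> in M. real_cond_exp M F prod \<omega> = gtr sA i j (X s \<omega>, thetahat s \<omega>)"
    using s1 XB by eventually_elim (simp add: gtr_def gfun_wt x_def)
  have gXM[measurable]: "(\<lambda>\<omega>. gtr sA i j (X s \<omega>, thetahat s \<omega>)) \<in> borel_measurable M"
    by measurable
  have s3: "AE \<omega> in M. real_cond_exp M H (real_cond_exp M F prod) \<omega> = real_cond_exp M H prod \<omega>"
    by (rule HH.real_cond_exp_nested_subalg[OF subF HF prod_int])
  have s4: "AE \<omega> in M. real_cond_exp M H (real_cond_exp M F prod) \<omega> = real_cond_exp M H (\<lambda>\<omega>. gtr sA i j (X s \<omega>, thetahat s \<omega>)) \<omega>"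
    by (rule HH.real_cond_exp_cong[OF s2]) auto
  have s5: "AE \<omega> in M. real_cond_exp M H (\<lambda>\<omega>. gtr sA i j (X s \<omega>, thetahat s \<omega>)) \<omega> = (\<integral>a. gtr sA i j (a, thetahat s \<omega>) \<partial>(distr M borel (X s)))"
    by (rule freeze[OF M subH XM thH _ gtr_meas gtr_bound]) (use Xi in \<open>simp add: H_def\<close>)
  have s6: "(\<integral>a. gtr sA i j (a, th) \<partial>pA) = Sigma_pop pA th $ i $ j" for th
  proof -
    have m1: "(\<lambda>a. gtr sA i j (a, th)) \<in> borel_measurable pA"
      unfolding measurable_cong_sets[OF pAs refl] by measurable
    have m2: "(\<lambda>a. gfun i j a th) \<in> borel_measurable pA"
    proof -
      have eqg: "(\<lambda>a. gfun i j a th) = (\<lambda>a. (\<Sum>k\<in>UNIV. a $ k $ i * a $ k $ j * wt a th k))"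
        by (simp add: gfun_wt)
      have wm[measurable]: "(\<lambda>a. wt a th k) \<in> borel_measurable borel" for k :: 'k
      proof -
        have "(\<lambda>a::real^'d^'k. (a, th)) \<in> borel \<rightarrow>\<^sub>M borel \<Otimes>\<^sub>M borel" by measurable
        then have "(\<lambda>a::real^'d^'k. wt (fst (a, th)) (snd (a, th)) k) \<in> borel_measurable borel"
          by (rule measurable_compose) (rule wt_meas)
        then show ?thesis by simp
      qed
      show ?thesis unfolding measurable_cong_sets[OF pAs refl] eqg by measurable
    qed
    have "(\<integral>a. gtr sA i j (a, th) \<partial>pA) = (\<integral>a. gfun i j a th \<partial>pA)"
      by (rule integral_cong_AE[OF m1 m2]) (use bnd in \<open>auto simp: gtr_def elim!: eventually_mono\<close>)
    then show ?thesis by (simp add: Sigma_pop_gfun)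
  qed
  from s3 s4 s5 show ?thesis
    by eventually_elim (simp add: s6 Xd H_def prod_def[abs_def])
qed


theorem lemma10:
  fixes M :: "'w measure"
    and pA :: "(real^'d::finite^'k::finite) measure"
    and X :: "nat \<Rightarrow> 'w \<Rightarrow> real^'d^'k"   \<comment> \<open>context sets; A_{t,k} = X t \<omega> $ k\<close>
    and I :: "nat \<Rightarrow> 'w \<Rightarrow> 'k"              \<comment> \<open>index of the pulled arm\<close>
    and r :: "nat \<Rightarrow> 'w \<Rightarrow> real"            \<comment> \<open>rewards\<close>
    and thetahat :: "nat \<Rightarrow> 'w \<Rightarrow> real^'d"  \<comment> \<open>estimates used in round t\<close>
    and \<theta> :: "real^'d" and s0 :: nat and s2 sA \<sigma> phi0 lam0 :: real and t :: nat
  defines "S \<equiv> {i. \<theta> $ i \<noteq> 0}"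
    and "A \<equiv> (\<lambda>s \<omega>. X s \<omega> $ I s \<omega>)"
    and "H \<equiv> hist M X I r"
    and "C0 \<equiv> min (1/2) (phi0\<^sup>2 / (256 * real s0 * sA\<^sup>2))"
    and "SigmaHat \<equiv> (\<lambda>\<omega>. (1 / real t) *\<^sub>R (\<Sum>s\<in>{1..t}. outer (X s \<omega> $ I s \<omega>)))"
    and "SigmaT \<equiv> (\<lambda>\<omega>. (\<chi> i j. (1 / real t) *
            (\<Sum>s\<in>{1..t}. real_cond_exp M (hist M X I r (s - 1))
                 (\<lambda>\<omega>'. (X s \<omega>' $ I s \<omega>') $ i * (X s \<omega>' $ I s \<omega>') $ j) \<omega>)))"
  assumes K: "CARD('k) \<ge> 2"
    and M: "prob_space M"
    and pA: "prob_space pA" "sets pA = sets borel"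
    \<comment> \<open>measurability of the observed process\<close>
    and X_meas: "\<And>t. X t \<in> M \<rightarrow>\<^sub>M borel"
    and I_meas: "\<And>t. I t \<in> M \<rightarrow>\<^sub>M count_space UNIV"
    and r_meas: "\<And>t. r t \<in> M \<rightarrow>\<^sub>M borel"
    \<comment> \<open>contexts: i.i.d. with law pA, the round-t context independent of the past\<close>
    and X_distr: "\<And>t. t \<ge> 1 \<Longrightarrow> distr M borel (X t) = pA"
    and X_indep: "\<And>t. t \<ge> 1 \<Longrightarrow>
        prob_space.indep_set M (sets (H (t - 1))) (preimgs M (X t) borel)"
    \<comment> \<open>noise: conditionally on F_t and A_t, mean zero and sigma-sub-Gaussian\<close>
    and noise_int: "\<And>t. t \<ge> 1 \<Longrightarrow> integrable M (\<lambda>\<omega>. r t \<omega> - A t \<omega> \<bullet> \<theta>)"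
    and noise_mean: "\<And>t. t \<ge> 1 \<Longrightarrow> AE \<omega> in M.
        real_cond_exp M (hist_ctx_act M X I r t) (\<lambda>\<omega>. r t \<omega> - A t \<omega> \<bullet> \<theta>) \<omega> = 0"
    and noise_subg: "\<And>t l. t \<ge> 1 \<Longrightarrow>
        integrable M (\<lambda>\<omega>. exp (l * (r t \<omega> - A t \<omega> \<bullet> \<theta>))) \<and>
        (AE \<omega> in M. real_cond_exp M (hist_ctx_act M X I r t)
                        (\<lambda>\<omega>. exp (l * (r t \<omega> - A t \<omega> \<bullet> \<theta>))) \<omega> \<le> exp (l\<^sup>2 * \<sigma>\<^sup>2 / 2))"
    \<comment> \<open>Assumption 1\<close>
    and s0: "s0 \<ge> 1" and sparse: "card S \<le> s0" and norm_theta: "norm \<theta> \<le> s2"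
    and sA: "sA > 0" and bounded: "AE a in pA. \<forall>k. norm (a $ k) \<le> sA"
    \<comment> \<open>Assumption 2\<close>
    and phi0_pos: "phi0 > 0" and compat_ass: "\<And>\<theta>'. compat s0 (Sigma_pop pA \<theta>') S \<ge> ereal (phi0\<^sup>2)"
    \<comment> \<open>the TH LASSO bandit algorithm with parameter lambda0\<close>
    and lam0_pos: "lam0 > 0"
    and init: "\<exists>c. \<forall>\<omega>\<in>space M. thetahat 1 \<omega> = c"
    and greedy: "\<And>t \<omega>. t \<ge> 1 \<Longrightarrow> \<omega> \<in> space M \<Longrightarrow> I t \<omega> \<in> argmax_arms (X t \<omega>) (thetahat t \<omega>)"
    and tie_uniform: "\<And>t k. t \<ge> 1 \<Longrightarrow> AE \<omega> in M.
        real_cond_exp M (hist_ctx M X I r t) (indicator {\<omega>\<in>space M. I t \<omega> = k}) \<omega> =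
          (if k \<in> argmax_arms (X t \<omega>) (thetahat t \<omega>)
           then 1 / real (card (argmax_arms (X t \<omega>) (thetahat t \<omega>))) else 0)"
    and update: "\<And>t \<omega>. t \<ge> 1 \<Longrightarrow> \<omega> \<in> space M \<Longrightarrow>
        \<exists>L. (\<forall>th. lasso_obj (lasso_lambda lam0 CARD('d) t) t (\<lambda>s. A s \<omega>) (\<lambda>s. r s \<omega>) L
                   \<le> lasso_obj (lasso_lambda lam0 CARD('d) t) t (\<lambda>s. A s \<omega>) (\<lambda>s. r s \<omega>) th) \<and>
            thetahat (Suc t) \<omega> =
              th_update (lasso_lambda lam0 CARD('d) t) t (\<lambda>s. A s \<omega>) (\<lambda>s. r s \<omega>) L"
    and thetahat_meas: "\<And>t. t \<ge> 1 \<Longrightarrow> thetahat t \<in> H (t - 1) \<rightarrow>\<^sub>M borel"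
    \<comment> \<open>time horizon\<close>
    and t_large: "real t \<ge> 2 * ln (2 * (real CARD('d)) ^ 2) / C0 ^ 2"
  shows "measure M {\<omega> \<in> space M.
            ereal (maxnorm (SigmaHat \<omega> - SigmaT \<omega>) / (2 * sA\<^sup>2))
              \<ge> compat s0 (SigmaT \<omega>) S / ereal (64 * real s0 * sA\<^sup>2)}
         \<le> exp (- (real t * C0\<^sup>2 / 2))"
proof -
  interpret prob_space M by (rule M)
  note hm = X_meas I_meas r_meas
  have sA0: "sA > 0" by (rule sA)
  have C0pos: "C0 > 0" unfolding C0_def using phi0_pos s0 sA by simp
  have C0le: "C0 \<le> phi0\<^sup>2 / (256 * real s0 * sA\<^sup>2)" unfolding C0_def by simp
  have d1: "real CARD('d) \<ge> 1" by simp
  have lnpos: "ln (2 * (real CARD('d))\<^sup>2) > 0"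
  proof -
    have "(real CARD('d))\<^sup>2 \<ge> 1" using d1 by simp
    then have "1 < 2 * (real CARD('d))\<^sup>2" by linarith
    then show ?thesis by simp
  qed
  have tC: "real t * C0\<^sup>2 \<ge> 2 * ln (2 * (real CARD('d))\<^sup>2)"
    using t_large C0pos by (simp add: pos_divide_le_eq)
  have t1: "t \<ge> 1"
  proof (rule ccontr)
    assume "\<not> t \<ge> 1" then have "t = 0" by simp
    then show False using tC lnpos by simp
  qed
  define c where "c = 2 * sA\<^sup>2"
  have cpos: "c > 0" using sA by (simp add: c_def)
  define \<epsilon> where "\<epsilon> = 8 * sA\<^sup>2 * C0 * real t"
  have epos: "\<epsilon> > 0" using sA C0pos t1 by (simp add: \<epsilon>_def)
  define prod where "prod s i j \<omega> = (X s \<omega> $ I s \<omega>) $ i * (X s \<omega> $ I s \<omega>) $ j" for s i j \<omega>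
  define Dm where "Dm i j s \<omega> = prod s i j \<omega> - real_cond_exp M (H (s - 1)) (prod s i j) \<omega>" for i j s \<omega>
  have subH: "subalgebra M (H n)" for n unfolding H_def by (rule subalg_hist[OF hm])
  have Hmono: "m \<le> n \<Longrightarrow> sets (H m) \<subseteq> sets (H n)" for m n unfolding H_def by (rule hist_mono[OF hm])
  have XB: "AE \<omega> in M. \<forall>k. norm (X s \<omega> $ k) \<le> sA" if "s \<ge> 1" for s
    by (rule AE_distrD[OF X_meas]) (unfold X_distr[OF that], rule bounded)
  have prodH: "prod s i j \<in> borel_measurable (H s)" if "s \<ge> 1" for s i j
    unfolding prod_def H_def using X_hist[OF hm that order.refl] I_hist[OF hm that order.refl]
    by (rule sel_meas)
  have prodM: "prod s i j \<in> borel_measurable M" if "s \<ge> 1" for s i j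
    by (rule measurable_from_subalg[OF subH prodH[OF that]])
  have prodB: "AE \<omega> in M. \<bar>prod s i j \<omega>\<bar> \<le> sA\<^sup>2" if "s \<ge> 1" for s i j
    using XB[OF that] by eventually_elim (simp add: prod_def sAsq)
  have prodI: "integrable M (prod s i j)" if "s \<ge> 1" for s i j
    by (rule integrable_const_bound[where B="sA\<^sup>2"]) (use prodB[OF that] prodM[OF that] in auto)
  have Dm_meas: "Dm i j s \<in> borel_measurable (H s)" if "s \<ge> 1" for i j s
  proof -
    have sub: "subalgebra (H s) (H (s - 1))" using Hmono[of "s - 1" s] subH by (simp add: subalgebra_def)
    have "real_cond_exp M (H (s - 1)) (prod s i j) \<in> borel_measurable (H s)"
      by (rule measurable_from_subalg[OF sub borel_measurable_cond_exp])
    then show ?thesis unfolding Dm_def[abs_def] using prodH[OF that] by measurable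
  qed
  have Dm_bound: "AE \<omega> in M. \<bar>Dm i j s \<omega>\<bar> \<le> c" if "s \<ge> 1" for i j s
  proof -
    interpret HH: finite_measure_subalgebra M "H (s - 1)" by unfold_locales (rule subH)
    have u: "AE \<omega> in M. real_cond_exp M (H (s - 1)) (prod s i j) \<omega> \<le> sA\<^sup>2"
      by (rule HH.real_cond_exp_le_c[OF prodI[OF that]]) (use prodB[OF that, of i j] in \<open>auto elim!: eventually_mono\<close>)
    have l: "AE \<omega> in M. real_cond_exp M (H (s - 1)) (prod s i j) \<omega> \<ge> - sA\<^sup>2"
      by (rule HH.real_cond_exp_ge_c[OF prodI[OF that]]) (use prodB[OF that, of i j] in \<open>auto elim!: eventually_mono\<close>)
    from u l prodB[OF that, of i j] show ?thesis
      by eventually_elim (auto simp: Dm_def c_def abs_le_iff)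
  qed
  have Dm_zero: "AE \<omega> in M. real_cond_exp M (H (s - 1)) (Dm i j s) \<omega> = 0" if "s \<ge> 1" for i j s
  proof -
    interpret HH: finite_measure_subalgebra M "H (s - 1)" by unfold_locales (rule subH)
    have ie: "integrable M (real_cond_exp M (H (s - 1)) (prod s i j))"
      by (rule HH.real_cond_exp_int(1)[OF prodI[OF that]])
    have a: "AE \<omega> in M. real_cond_exp M (H (s - 1)) (Dm i j s) \<omega> =
        real_cond_exp M (H (s - 1)) (prod s i j) \<omega> - real_cond_exp M (H (s - 1)) (real_cond_exp M (H (s - 1)) (prod s i j)) \<omega>"
      unfolding Dm_def[abs_def] by (rule HH.real_cond_exp_diff[OF prodI[OF that] ie])
    have b: "AE \<omega> in M. real_cond_exp M (H (s - 1)) (real_cond_exp M (H (s - 1)) (prod s i j)) \<omega> = real_cond_exp M (H (s - 1)) (prod s i j) \<omega>"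
      by (rule HH.real_cond_exp_F_meas[OF ie]) simp
    from a b show ?thesis by eventually_elim simp
  qed
  have azB: "measure M {\<omega> \<in> space M. \<bar>\<Sum>s\<in>{1..t}. Dm i j s \<omega>\<bar> \<ge> \<epsilon>} \<le> 2 * exp (- (\<epsilon>\<^sup>2 / (2 * real t * c\<^sup>2)))" for i j
    by (rule azuma_tail[where M=M and F=H and D="Dm i j" and c=c, OF M subH Hmono Dm_meas Dm_bound Dm_zero cpos t1 epos])
  have azB': "2 * exp (- (\<epsilon>\<^sup>2 / (2 * real t * c\<^sup>2))) = 2 * exp (- (8 * real t * C0\<^sup>2))"
    using sA t1 by (simp add: \<epsilon>_def c_def power2_eq_square field_simps)
  have good: "AE \<omega> in M. \<forall>s\<in>{1..t}. \<forall>i\<in>UNIV. \<forall>j\<in>UNIV.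
      real_cond_exp M (hist M X I r (s - 1)) (\<lambda>\<omega>'. (X s \<omega>' $ I s \<omega>') $ i * (X s \<omega>' $ I s \<omega>') $ j) \<omega>
        = Sigma_pop pA (thetahat s \<omega>) $ i $ j"
  proof (rule AE_finite_allI, simp, rule AE_finite_allI, simp, rule AE_finite_allI, simp)
    fix s i j assume s: "s \<in> {1..t}"
    then have s1: "s \<ge> 1" by simp
    show "AE \<omega> in M. real_cond_exp M (hist M X I r (s - 1)) (\<lambda>\<omega>'. (X s \<omega>' $ I s \<omega>') $ i * (X s \<omega>' $ I s \<omega>') $ j) \<omega>
        = Sigma_pop pA (thetahat s \<omega>) $ i $ j"
      by (rule cond_gram[where M=M and pA=pA and X=X and I=I and r=r and thetahat=thetahat and s=s and sA=sA, OF M pA(2) hm s1 X_distr[OF s1] X_indep[OF s1, unfolded H_def] bounded tie_uniform[OF s1] thetahat_meas[OF s1, unfolded H_def]])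
  qed
  have goodC: "AE \<omega> in M. compat s0 (SigmaT \<omega>) S \<ge> ereal (phi0\<^sup>2)"
    using good
  proof eventually_elim
    case (elim \<omega>)
    have "SigmaT \<omega> = (\<chi> i j. (1 / real t) * (\<Sum>s\<in>{1..t}. Sigma_pop pA (thetahat s \<omega>) $ i $ j))"
      unfolding SigmaT_def using elim by (intro vec_eq_iff[THEN iffD2] allI) simp
    then show ?case using compat_avg[where Ms="\<lambda>s. Sigma_pop pA (thetahat s \<omega>)" and n=t and ?s0.0=s0 and S=S and \<phi>="phi0\<^sup>2", OF t1] compat_ass by simp
  qed
  have DmM: "Dm i j s \<in> borel_measurable M" if "s \<ge> 1" for i j s
    by (rule measurable_from_subalg[OF subH Dm_meas[OF that]])
  define B where "B ij = {\<omega> \<in> space M. \<epsilon> \<le> \<bar>\<Sum>s\<in>{1..t}. Dm (fst ij) (snd ij) s \<omega>\<bar>}" for ij :: "'d \<times> 'd"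
  have Bm: "B ij \<in> sets M" for ij
  proof -
    have "(\<lambda>\<omega>. \<Sum>s\<in>{1..t}. Dm (fst ij) (snd ij) s \<omega>) \<in> borel_measurable M"
      by (rule borel_measurable_sum) (auto intro: DmM)
    then show ?thesis unfolding B_def by measurable
  qed
  define E where "E = {\<omega> \<in> space M.
            ereal (maxnorm (SigmaHat \<omega> - SigmaT \<omega>) / (2 * sA\<^sup>2))
              \<ge> compat s0 (SigmaT \<omega>) S / ereal (64 * real s0 * sA\<^sup>2)}"
  have entry: "(SigmaHat \<omega> - SigmaT \<omega>) $ i $ j = (1 / real t) * (\<Sum>s\<in>{1..t}. Dm i j s \<omega>)" for \<omega> i j
    by (simp add: SigmaHat_def SigmaT_def Dm_def prod_def[abs_def] H_def outer_def sum_subtractf right_diff_distrib)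
  have incl: "AE \<omega> in M. \<omega> \<in> E \<longrightarrow> \<omega> \<in> (\<Union>ij\<in>UNIV. B ij)"
    using goodC
  proof eventually_elim
    case (elim \<omega>)
    show ?case
    proof
      assume wE: "\<omega> \<in> E"
      define \<Delta> where "\<Delta> = SigmaHat \<omega> - SigmaT \<omega>"
      define K where "K = 64 * real s0 * sA\<^sup>2"
      have Kpos: "K > 0" using s0 sA by (simp add: K_def)
      have "ereal (phi0\<^sup>2) / ereal K \<le> compat s0 (SigmaT \<omega>) S / ereal K"
        by (rule ereal_divide_right_mono[OF elim]) (use Kpos in simp)
      also have "\<dots> \<le> ereal (maxnorm \<Delta> / (2 * sA\<^sup>2))"
        using wE by (simp add: E_def \<Delta>_def K_def)
      finally have "phi0\<^sup>2 / K \<le> maxnorm \<Delta> / (2 * sA\<^sup>2)" using Kpos by simp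
      then have "phi0\<^sup>2 / (32 * real s0) \<le> maxnorm \<Delta>"
        using sA s0 by (simp add: K_def field_simps power2_eq_square)
      moreover have "8 * sA\<^sup>2 * C0 \<le> phi0\<^sup>2 / (32 * real s0)"
        using C0le sA s0 by (simp add: field_simps power2_eq_square)
      ultimately have mx: "8 * sA\<^sup>2 * C0 \<le> maxnorm \<Delta>" by linarith
      have fin: "finite {\<bar>\<Delta> $ i $ j\<bar> | i j. True}"
      proof -
        have "{\<bar>\<Delta> $ i $ j\<bar> | i j. True} = (\<lambda>ij. \<bar>\<Delta> $ fst ij $ snd ij\<bar>) ` UNIV"
        proof (rule set_eqI, rule iffI)
          fix v assume "v \<in> {\<bar>\<Delta> $ i $ j\<bar> | i j. True}"
          then obtain i j where "v = \<bar>\<Delta> $ i $ j\<bar>" by auto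
          then show "v \<in> (\<lambda>ij. \<bar>\<Delta> $ fst ij $ snd ij\<bar>) ` UNIV" by (intro image_eqI[where x="(i, j)"]) auto
        qed auto
        then show ?thesis by simp
      qed
      have "maxnorm \<Delta> \<in> {\<bar>\<Delta> $ i $ j\<bar> | i j. True}"
        unfolding maxnorm_def by (rule Max_in[OF fin]) auto
      then obtain i j where ij: "maxnorm \<Delta> = \<bar>\<Delta> $ i $ j\<bar>" by auto
      have "\<epsilon> = real t * (8 * sA\<^sup>2 * C0)" by (simp add: \<epsilon>_def)
      also have "\<dots> \<le> real t * \<bar>\<Delta> $ i $ j\<bar>" using mx ij by (intro mult_left_mono) auto
      also have "\<dots> = \<bar>\<Sum>s\<in>{1..t}. Dm i j s \<omega>\<bar>"
        using t1 unfolding \<Delta>_def entry by (simp add: abs_mult)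
      finally have "\<omega> \<in> B (i, j)" using wE by (simp add: B_def E_def)
      then show "\<omega> \<in> (\<Union>ij\<in>UNIV. B ij)" by blast
    qed
  qed
  have UBm: "(\<Union>ij\<in>UNIV. B ij) \<in> sets M" using Bm by auto
  have "emeasure M E \<le> emeasure M (\<Union>ij\<in>UNIV. B ij)"
    by (rule emeasure_mono_AE[OF incl UBm])
  then have mE: "measure M E \<le> measure M (\<Union>ij\<in>UNIV. B ij)"
    by (simp add: emeasure_eq_measure)
  also have "\<dots> \<le> (\<Sum>ij\<in>UNIV. measure M (B ij))"
    by (rule measure_UNION_le) (auto intro: Bm)
  also have "\<dots> \<le> (\<Sum>ij\<in>(UNIV::('d\<times>'d) set). 2 * exp (- (8 * real t * C0\<^sup>2)))"
    by (rule sum_mono) (use azB azB' in \<open>simp add: B_def\<close>)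
  also have "\<dots> = (real CARD('d))\<^sup>2 * (2 * exp (- (8 * real t * C0\<^sup>2)))"
    by (simp add: power2_eq_square)
  also have "\<dots> \<le> exp (- (real t * C0\<^sup>2 / 2))"
  proof -
    have "ln (2 * (real CARD('d))\<^sup>2) \<le> real t * C0\<^sup>2 / 2" using tC by simp
    then have "exp (ln (2 * (real CARD('d))\<^sup>2)) \<le> exp (real t * C0\<^sup>2 / 2)"
      by (subst exp_le_cancel_iff)
    moreover have "exp (ln (2 * (real CARD('d))\<^sup>2)) = 2 * (real CARD('d))\<^sup>2"
      by (rule exp_ln) simp
    ultimately have le2: "2 * (real CARD('d))\<^sup>2 \<le> exp (real t * C0\<^sup>2 / 2)" by simp
    have "(real CARD('d))\<^sup>2 * (2 * exp (- (8 * real t * C0\<^sup>2))) = (2 * (real CARD('d))\<^sup>2) * exp (- (8 * real t * C0\<^sup>2))"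
      by simp
    also have "\<dots> \<le> exp (real t * C0\<^sup>2 / 2) * exp (- (8 * real t * C0\<^sup>2))"
      by (rule mult_right_mono[OF le2]) simp
    also have "\<dots> = exp (real t * C0\<^sup>2 / 2 - 8 * real t * C0\<^sup>2)" by (simp add: exp_add[symmetric])
    also have "\<dots> \<le> exp (- (real t * C0\<^sup>2 / 2))" by simp
    finally show ?thesis .
  qed
  finally show ?thesis unfolding E_def .
qed




end
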